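(* Let $a,b\in\mathbb{C}$ with $a\neq 0$. Let $y(x)=M(1;a;b;x)\in\mathbb{C}[[x]]$ be the master series with parameters $m=1$, $a$, $b$, i.e. $$y(x)=1+x+\sum_{\ell=2}^{\infty}\frac{x^{\ell}}{\ell!}\prod_{\gamma=1}^{\ell-1}(1-a\gamma+b\ell).$$ Then $y$ satisfies, as an identity of formal power series, $y^{a}=1+a\,x\,y^{b}$.
   Context: For $m,a,b\in\mathbb{C}$ the master series is the formal power series $M(m;a;b;x)=m+x+\sum_{\ell\ge 2}\frac{x^\ell}{\ell!}\prod_{\gamma=1}^{\ell-1}(m-a\gamma+b\ell)$. For a formal power series $f$ with constant term $1$ and $p\in\mathbb{C}$, $f^{p}$ denotes the formal power series $\exp(p\log f)$ (binomial series), so that $f^p$ has constant term $1$. *)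

theory Defs
  imports "HOL-Computational_Algebra.Formal_Power_Series"
begin

definition master_series :: "complex \<Rightarrow> complex \<Rightarrow> complex \<Rightarrow> complex fps" where
  "master_series m a b = Abs_fps (\<lambda>l. if l = 0 then m else if l = 1 then 1
      else (\<Prod>\<gamma>=1..l-1. m - a * of_nat \<gamma> + b * of_nat l) / of_nat (fact l))"

text \<open>Complex power of a power series with constant term 1, via the binomial series:
  f^p = (1 + (f - 1))^p = sum_n (p choose n) (f - 1)^n.\<close>
definition fps_cpow :: "complex fps \<Rightarrow> complex \<Rightarrow> complex fps" where
  "fps_cpow f p = fps_binomial p oo (f - 1)"

end

theory Submission imports Defs "HOL-Computational_Algebra.Polynomial" begin
unbundle fps_syntax

definition pf :: "(complex \<Rightarrow> complex) \<Rightarrow> bool" where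
  "pf f \<longleftrightarrow> (\<exists>P. \<forall>x. f x = poly P x)"

lemma pf_const[simp,intro]: "pf (\<lambda>x. c)"
  unfolding pf_def by (rule exI[of _ "[:c:]"]) simp

lemma pf_id[simp,intro]: "pf (\<lambda>x. x)"
  unfolding pf_def by (rule exI[of _ "[:0,1:]"]) simp

lemma pf_add[intro]: "pf f \<Longrightarrow> pf g \<Longrightarrow> pf (\<lambda>x. f x + g x)"
  unfolding pf_def by (metis poly_add)

lemma pf_diff[intro]: "pf f \<Longrightarrow> pf g \<Longrightarrow> pf (\<lambda>x. f x - g x)"
  unfolding pf_def by (metis poly_diff)

lemma pf_mult[intro]: "pf f \<Longrightarrow> pf g \<Longrightarrow> pf (\<lambda>x. f x * g x)"
  unfolding pf_def by (metis poly_mult)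

lemma pf_div[intro]: "pf f \<Longrightarrow> pf (\<lambda>x. f x / c)"
proof -
  assume "pf f"
  then have "pf (\<lambda>x. f x * (1/c))" by (intro pf_mult) auto
  then show ?thesis by simp
qed

lemma pf_sum[intro]: "(\<And>i. i \<in> A \<Longrightarrow> pf (f i)) \<Longrightarrow> pf (\<lambda>x. \<Sum>i\<in>A. f i x)"
proof (induction A rule: infinite_finite_induct)
  case (insert i A) then show ?case by (simp add: pf_add)
qed auto

lemma pf_prod[intro]: "(\<And>i. i \<in> A \<Longrightarrow> pf (f i)) \<Longrightarrow> pf (\<lambda>x. \<Prod>i\<in>A. f i x)"
proof (induction A rule: infinite_finite_induct)
  case (insert i A) then show ?case by (simp add: pf_mult)
qed auto

lemma pf_zero:
  assumes "pf f" "infinite S" "\<And>x. x \<in> S \<Longrightarrow> f x = 0"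
  shows "f x = 0"
proof -
  obtain P where P: "\<And>x. f x = poly P x" using assms(1) unfolding pf_def by blast
  have "P = 0"
  proof (rule ccontr)
    assume "P \<noteq> 0"
    then have "finite {x. poly P x = 0}" by (rule poly_roots_finite)
    moreover have "S \<subseteq> {x. poly P x = 0}" using assms(3) P by auto
    ultimately show False using assms(2) finite_subset by blast
  qed
  then show ?thesis using P by simp
qed

definition qc :: "complex \<Rightarrow> complex \<Rightarrow> nat \<Rightarrow> complex \<Rightarrow> complex" where
  "qc a b n p = (if n = 0 then 1 else
     p * (\<Prod>j<n-1. p + b * of_nat n - a * of_nat (Suc j)) / fact n)"

lemma pf_qc[intro]: "pf f \<Longrightarrow> pf (\<lambda>x. qc a b n (f x))"
  unfolding qc_def by (cases "n = 0") (auto intro!: pf_div pf_mult pf_prod pf_add pf_diff)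

lemma qc_0[simp]: "qc a b 0 p = 1" by (simp add: qc_def)

lemma qc_at0: "n > 0 \<Longrightarrow> qc a b n 0 = 0" by (simp add: qc_def)

lemma cancel_aux: "(c::complex) \<noteq> 0 \<Longrightarrow> x * c / (c * f) = x / f"
  by (cases "f = 0") (simp_all add: field_simps)

lemma qc_rel:
  "qc a b (Suc m) (p + a - b) - qc a b (Suc m) (p - b) = a * qc a b m p"
proof (cases m)
  case 0
  then show ?thesis by (simp add: qc_def)
next
  case (Suc k)
  define P where "P = (\<Prod>j<k. p + b * of_nat (Suc k) - a * of_nat (Suc j))"
  have e1: "(\<Prod>j<Suc k. p + a - b + b * of_nat (Suc (Suc k)) - a * of_nat (Suc j))
      = (p + b * of_nat (Suc k)) * P"
    unfolding prod.lessThan_Suc_shift P_def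
    by (simp add: algebra_simps)
  have e2: "(\<Prod>j<Suc k. p - b + b * of_nat (Suc (Suc k)) - a * of_nat (Suc j))
      = P * (p + b * of_nat (Suc k) - a * of_nat (Suc k))"
    unfolding prod.lessThan_Suc P_def
    by (simp add: algebra_simps)
  have e3: "qc a b (Suc k) p = p * P / fact (Suc k)"
    unfolding qc_def P_def by simp
  have "qc a b (Suc m) (p + a - b) - qc a b (Suc m) (p - b)
     = ((p + a - b) * ((p + b * of_nat (Suc k)) * P) - (p - b) * (P * (p + b * of_nat (Suc k) - a * of_nat (Suc k)))) / fact (Suc (Suc k))"
    using e1 e2 Suc unfolding qc_def by (simp add: diff_divide_distrib)
  also have "\<dots> = (a * p * P * (of_nat (Suc k) + 1)) / ((of_nat (Suc k) + 1) * fact (Suc k))"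
    by (simp only: fact_Suc[of "Suc k"] of_nat_mult) (simp add: algebra_simps)
  also have "\<dots> = a * (p * P / fact (Suc k))"
  proof -
    have "(of_nat (Suc k) + 1 :: complex) \<noteq> 0" 
    proof -
      have "(of_nat (Suc k) + 1 :: complex) = of_nat (Suc (Suc k))" by simp
      also have "\<dots> \<noteq> 0" by (simp only: of_nat_eq_0_iff)
      finally show ?thesis .
    qed
    then have "(a * p * P * (of_nat (Suc k) + 1)) / ((of_nat (Suc k) + 1) * fact (Suc k)) = a * p * P / fact (Suc k)"
      by (rule cancel_aux)
    then show ?thesis by simp
  qed
  finally show ?thesis using e3 Suc by simp
qed

lemma periodic_zero:
  fixes a :: complex
  assumes "a \<noteq> 0" "pf H" "\<And>x. H (x + a) = H x" "H 0 = 0"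
  shows "H p = 0"
proof (rule pf_zero[OF assms(2)])
  have "H (of_nat k * a) = 0" for k
  proof (induction k)
    case (Suc k)
    have "H (of_nat (Suc k) * a) = H (of_nat k * a + a)" by (simp add: algebra_simps)
    then show ?case using assms(3) Suc by simp
  qed (use assms(4) in simp)
  then show "\<And>x. x \<in> range (\<lambda>k::nat. of_nat k * a) \<Longrightarrow> H x = 0" by auto
  have "inj (\<lambda>k::nat. of_nat k * a)" using assms(1) by (auto intro: injI)
  then show "infinite (range (\<lambda>k::nat. of_nat k * a))" using finite_imageD by blast
qed

lemma HR:
  assumes "a \<noteq> 0"
  shows "(\<Sum>k=0..n. qc a b k p * qc a b (n-k) s) = qc a b n (p+s)"
proof (induction n arbitrary: p)
  case 0
  then show ?case by simp
next
  case (Suc n)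
  define H where "H p = (\<Sum>k=0..Suc n. qc a b k p * qc a b (Suc n-k) s) - qc a b (Suc n) (p+s)" for p
  have Hs: "H p = qc a b (Suc n) s + (\<Sum>j=0..n. qc a b (Suc j) p * qc a b (n-j) s) - qc a b (Suc n) (p+s)" for p
    unfolding H_def by (subst sum.atLeast0_atMost_Suc_shift) simp
  have "H (x + a) = H x" for x
  proof -
    have "H (x + a) - H x = (\<Sum>j=0..n. (qc a b (Suc j) ((x+b) + a - b) - qc a b (Suc j) ((x+b) - b)) * qc a b (n-j) s)
       - (qc a b (Suc n) ((x+b+s) + a - b) - qc a b (Suc n) ((x+b+s) - b))"
      unfolding Hs by (simp add: algebra_simps sum_subtractf[symmetric])
    also have "\<dots> = (\<Sum>j=0..n. a * qc a b j (x+b) * qc a b (n-j) s) - a * qc a b n (x+b+s)"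
      by (simp only: qc_rel)
    also have "\<dots> = a * ((\<Sum>j=0..n. qc a b j (x+b) * qc a b (n-j) s) - qc a b n (x+b+s))"
      by (simp add: sum_distrib_left algebra_simps)
    also have "\<dots> = 0" using Suc.IH[of "x+b"] by simp
    finally show ?thesis by simp
  qed
  moreover have "pf H" unfolding H_def by (intro pf_diff pf_sum pf_mult pf_qc) auto
  moreover have "H 0 = 0" unfolding Hs by (simp add: qc_at0)
  ultimately have "H p = 0" using periodic_zero[OF assms, of H p] by blast
  then show ?case unfolding H_def by simp
qed

definition Qf :: "complex \<Rightarrow> complex \<Rightarrow> complex \<Rightarrow> complex fps" where
  "Qf a b p = Abs_fps (\<lambda>n. qc a b n p)"

lemma Qf_mult: "a \<noteq> 0 \<Longrightarrow> Qf a b p * Qf a b s = Qf a b (p + s)"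
  by (simp add: fps_eq_iff fps_mult_nth Qf_def HR)

lemma Qf_0: "Qf a b 0 = 1"
  by (auto simp: fps_eq_iff Qf_def qc_at0)

lemma Qf_nat: "a \<noteq> 0 \<Longrightarrow> Qf a b (of_nat m) = Qf a b 1 ^ m"
proof (induction m)
  case 0 then show ?case by (simp add: Qf_0)
next
  case (Suc m)
  then show ?case by (simp add: Qf_mult[symmetric] algebra_simps)
qed

lemma master_Qf: "master_series 1 a b = Qf a b 1"
proof (rule fps_ext)
  fix n
  show "master_series 1 a b $ n = Qf a b 1 $ n"
  proof (cases "n \<le> 1")
    case True
    then consider "n = 0" | "n = 1" by linarith
    then show ?thesis by cases (simp_all add: master_series_def Qf_def qc_def)
  next
    case False
    then show ?thesis
      unfolding master_series_def Qf_def qc_def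
      by (simp add: prod.atLeast1_atMost_eq algebra_simps)
  qed
qed

lemma cpow_nat:
  assumes "y $ 0 = 1"
  shows "fps_cpow y (of_nat m) = y ^ m"
proof -
  have "(1 + fps_X) oo (y - 1) = y"
    using assms by (simp add: fps_compose_add_distrib)
  then show ?thesis
    unfolding fps_cpow_def fps_binomial_of_nat
    using fps_compose_power[of "y - 1" "1 + fps_X" m] assms by simp
qed

lemma pf_cpow: "pf (\<lambda>p. fps_cpow y p $ n)"
  unfolding fps_cpow_def fps_compose_nth fps_binomial_nth gbinomial_prod_rev
  by (intro pf_sum pf_mult pf_div pf_prod pf_diff) auto

lemma cpow_Qf:
  assumes "a \<noteq> 0"
  shows "fps_cpow (Qf a b 1) p = Qf a b p"
proof (rule fps_ext)
  fix n
  define f where "f p = fps_cpow (Qf a b 1) p $ n - Qf a b p $ n" for p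
  have pf: "pf f"
    unfolding Qf_def f_def by (simp add: pf_diff pf_cpow pf_qc)
  have inf: "infinite (range (of_nat :: nat \<Rightarrow> complex))"
    using finite_imageD inj_of_nat by blast
  have "Qf a b 1 $ 0 = 1" by (simp add: Qf_def)
  then have z: "x \<in> range of_nat \<Longrightarrow> f x = 0" for x
    unfolding f_def using cpow_nat Qf_nat[OF assms] by auto
  have "f p = 0" by (rule pf_zero[OF pf inf z])
  then show "fps_cpow (Qf a b 1) p $ n = Qf a b p $ n" unfolding f_def by simp
qed

lemma qc_step: "qc a b (Suc m) a = a * qc a b m b"
proof (cases m)
  case 0 then show ?thesis by (simp add: qc_def)
next
  case (Suc k)
  define P where "P = (\<Prod>j<k. b * of_nat (Suc (Suc k)) - a * of_nat (Suc j))"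
  have e1: "(\<Prod>j<Suc k. a + b * of_nat (Suc (Suc k)) - a * of_nat (Suc j)) = (b * of_nat (Suc (Suc k))) * P"
    unfolding prod.lessThan_Suc_shift P_def by (simp add: algebra_simps)
  have e2: "(\<Prod>j<k. b + b * of_nat (Suc k) - a * of_nat (Suc j)) = P"
    unfolding P_def by (simp add: algebra_simps)
  have nz: "(of_nat (Suc k) + 1 :: complex) \<noteq> 0"
  proof -
    have "(of_nat (Suc k) + 1 :: complex) = of_nat (Suc (Suc k))" by simp
    also have "\<dots> \<noteq> 0" by (simp only: of_nat_eq_0_iff)
    finally show ?thesis .
  qed
  have "qc a b (Suc m) a = a * (b * of_nat (Suc (Suc k)) * P) / fact (Suc (Suc k))"
    using Suc e1 unfolding qc_def by simp
  also have "\<dots> = (a * b * P * (of_nat (Suc k) + 1)) / ((of_nat (Suc k) + 1) * fact (Suc k))"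
    by (simp only: fact_Suc[of "Suc k"] of_nat_mult) (simp add: algebra_simps)
  also have "\<dots> = a * b * P / fact (Suc k)" by (rule cancel_aux[OF nz])
  also have "\<dots> = a * qc a b m b" using Suc e2 unfolding qc_def by simp
  finally show ?thesis .
qed

lemma Qf_eq: "Qf a b a = 1 + fps_const a * fps_X * Qf a b b"
proof (rule fps_ext)
  fix n show "Qf a b a $ n = (1 + fps_const a * fps_X * Qf a b b) $ n"
    by (cases n) (simp_all add: Qf_def qc_step mult.assoc)
qed

theorem mainTheorem1:
  fixes a b :: complex
  assumes "a \<noteq> 0"
  shows "fps_cpow (master_series 1 a b) a = 1 + fps_const a * fps_X * fps_cpow (master_series 1 a b) b"
  unfolding master_Qf cpow_Qf[OF assms] by (rule Qf_eq)

end
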